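(* Let $N\ge1$, $h\in(0,1)$, $\varepsilon\in(0,1/2]$, and let $\Phi$ be the opinion operator defined in the context. Then for every $V^0\in[-1,1]^N$ with nondecreasing components, the sequence $\Phi^n(V^0)$ converges as $n\to\infty$ to a fixed point of $\Phi$.
   Context: For $V=(v_1,\dots,v_N)\in[-1,1]^N$ and each $k$, let $J(v_k)=\{l\in\{1,\dots,N\}:|v_l-v_k|\le\varepsilon\}$ and $I(v_k)=|J(v_k)|$. Put $w_k(V)=v_k+\frac{h}{I(v_k)}\sum_{l\in J(v_k)}v_l$. Then $\Phi(V)=(v_1',\dots,v_N')$ where $v_k'=-1$ if $w_k<-1$, $v_k'=1$ if $w_k>1$, and $v_k'=w_k$ if $|w_k|\le1$. *)

theory Defs
  imports "HOL-Analysis.Analysis"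
begin

text \<open>Opinion vectors V = (v_1,...,v_N) are represented as real lists of length N
  (index k of the paper corresponds to list index k-1).\<close>

definition nbhd :: "real \<Rightarrow> real list \<Rightarrow> nat \<Rightarrow> nat set" where
  "nbhd \<epsilon> V k = {l. l < length V \<and> \<bar>V ! l - V ! k\<bar> \<le> \<epsilon>}"

definition wval :: "real \<Rightarrow> real \<Rightarrow> real list \<Rightarrow> nat \<Rightarrow> real" where
  "wval h \<epsilon> V k = V ! k + h / real (card (nbhd \<epsilon> V k)) * (\<Sum>l\<in>nbhd \<epsilon> V k. V ! l)"

definition clip :: "real \<Rightarrow> real" where
  "clip w = (if w < -1 then -1 else if w > 1 then 1 else w)"

definition Phi :: "real \<Rightarrow> real \<Rightarrow> real list \<Rightarrow> real list" where
  "Phi h \<epsilon> V = map (\<lambda>k. clip (wval h \<epsilon> V k)) [0..<length V]"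

end

theory Submission imports Defs begin

lemma nbhd_finite: "finite (nbhd \<epsilon> V k)"
  unfolding nbhd_def by (rule finite_subset[of _ "{..<length V}"]) auto

lemma nbhd_self: "k < length V \<Longrightarrow> 0 \<le> \<epsilon> \<Longrightarrow> k \<in> nbhd \<epsilon> V k"
  unfolding nbhd_def by auto

lemma nbhd_card_le: "card (nbhd \<epsilon> V k) \<le> length V"
proof -
  have "nbhd \<epsilon> V k \<subseteq> {..<length V}" unfolding nbhd_def by auto
  then show ?thesis using card_mono[of "{..<length V}"] by fastforce
qed

lemma nbhd_card_pos: "k < length V \<Longrightarrow> 0 \<le> \<epsilon> \<Longrightarrow> 0 < card (nbhd \<epsilon> V k)"
  using nbhd_finite nbhd_self card_gt_0_iff by blast

lemma Phi_len[simp]: "length (Phi h \<epsilon> V) = length V"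
  by (simp add: Phi_def)

lemma Phi_nth: "k < length V \<Longrightarrow> Phi h \<epsilon> V ! k = clip (wval h \<epsilon> V k)"
  by (simp add: Phi_def)

lemma clip_bounds: "clip w \<in> {-1..1}"
  by (simp add: clip_def)

lemma clip_id: "\<bar>clip w\<bar> < 1 \<Longrightarrow> clip w = w"
  by (auto simp: clip_def split: if_splits)

lemma mean_mono:
  fixes f :: "nat \<Rightarrow> real"
  assumes fA: "finite A" and fB: "finite B" and nA: "A \<noteq> {}" and nB: "B \<noteq> {}"
    and h1: "\<And>x y. x\<in>A \<Longrightarrow> x\<notin>B \<Longrightarrow> y\<in>B \<Longrightarrow> f x \<le> f y"
    and h2: "\<And>x y. x\<in>A \<Longrightarrow> y\<in>B \<Longrightarrow> y\<notin>A \<Longrightarrow> f x \<le> f y"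
  shows "sum f A / card A \<le> sum f B / card B"
proof -
  have key: "(\<Sum>x\<in>A. \<Sum>y\<in>B. f y - f x) = card A * sum f B - card B * sum f A"
    by (simp add: sum_subtractf sum_distrib_left)
  let ?C = "A \<inter> B"
  have z: "(\<Sum>x\<in>?C. \<Sum>y\<in>?C. f y - f x) = 0"
    by (simp add: sum_subtractf sum_distrib_left)
  have p1: "0 \<le> (\<Sum>x\<in>A - B. \<Sum>y\<in>B. f y - f x)"
    by (intro sum_nonneg) (use h1 in auto)
  have p2: "0 \<le> (\<Sum>x\<in>?C. \<Sum>y\<in>B - A. f y - f x)"
    by (intro sum_nonneg) (use h2 in auto)
  have s2: "(\<Sum>x\<in>?C. \<Sum>y\<in>B. f y - f x) = (\<Sum>x\<in>?C. \<Sum>y\<in>?C. f y - f x) + (\<Sum>x\<in>?C. \<Sum>y\<in>B - A. f y - f x)"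
  proof -
    have "\<And>x. (\<Sum>y\<in>B. f y - f x) = (\<Sum>y\<in>?C. f y - f x) + (\<Sum>y\<in>B - A. f y - f x)"
      using sum.Int_Diff[OF fB, of _ A] by (simp add: Int_commute)
    then show ?thesis by (simp add: sum.distrib)
  qed
  have "(\<Sum>x\<in>A. \<Sum>y\<in>B. f y - f x) = (\<Sum>x\<in>?C. \<Sum>y\<in>B. f y - f x) + (\<Sum>x\<in>A - B. \<Sum>y\<in>B. f y - f x)"
    using sum.Int_Diff[OF fA] by blast
  then have "0 \<le> card A * sum f B - card B * sum f A" using key z p1 p2 s2 by linarith
  moreover have "0 < card A" "0 < card B" using fA fB nA nB by (auto simp: card_gt_0_iff)
  ultimately show ?thesis by (simp add: divide_simps mult.commute)
qed

lemma wval_alt: "wval h \<epsilon> V k = V ! k + h * ((\<Sum>l\<in>nbhd \<epsilon> V k. V ! l) / card (nbhd \<epsilon> V k))"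
  by (simp add: wval_def)

lemma wval_gap:
  assumes "0 \<le> h" "0 \<le> \<epsilon>" "k < length V" "l < length V" "V!k \<le> V!l"
  shows "V!l - V!k \<le> wval h \<epsilon> V l - wval h \<epsilon> V k"
proof -
  have "(\<Sum>j\<in>nbhd \<epsilon> V k. V ! j) / card (nbhd \<epsilon> V k) \<le> (\<Sum>j\<in>nbhd \<epsilon> V l. V ! j) / card (nbhd \<epsilon> V l)"
  proof (rule mean_mono)
    show "nbhd \<epsilon> V k \<noteq> {}" "nbhd \<epsilon> V l \<noteq> {}" using nbhd_self assms by blast+
    show "V ! x \<le> V ! y" if "x \<in> nbhd \<epsilon> V k" "x \<notin> nbhd \<epsilon> V l" "y \<in> nbhd \<epsilon> V l" for x y
      using that assms unfolding nbhd_def by auto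
    show "V ! x \<le> V ! y" if "x \<in> nbhd \<epsilon> V k" "y \<in> nbhd \<epsilon> V l" "y \<notin> nbhd \<epsilon> V k" for x y
      using that assms unfolding nbhd_def by auto
  qed (auto simp: nbhd_finite)
  then show ?thesis unfolding wval_alt using assms(1) mult_left_mono by fastforce
qed

lemma stay_top:
  assumes "0 < h" "\<epsilon> \<le> 1/2" "0 \<le> \<epsilon>" "\<forall>j<length V. V!j \<in> {-1..1}" "k < length V" "V!k = 1"
  shows "Phi h \<epsilon> V ! k = 1"
proof -
  have nn: "\<forall>j\<in>nbhd \<epsilon> V k. 0 \<le> V!j" using assms unfolding nbhd_def by auto
  have "V!k \<le> (\<Sum>j\<in>nbhd \<epsilon> V k. V ! j)"
    by (rule member_le_sum) (use nn nbhd_self assms nbhd_finite in auto)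
  then have "0 < (\<Sum>j\<in>nbhd \<epsilon> V k. V ! j)" using assms by simp
  moreover have "0 < card (nbhd \<epsilon> V k)" using nbhd_card_pos assms by blast
  ultimately have "0 < h / card (nbhd \<epsilon> V k) * (\<Sum>j\<in>nbhd \<epsilon> V k. V ! j)" using assms by simp
  then have "wval h \<epsilon> V k > 1" unfolding wval_def using assms by simp
  then show ?thesis using assms by (simp add: Phi_nth clip_def)
qed

lemma stay_bot:
  assumes "0 < h" "\<epsilon> \<le> 1/2" "0 \<le> \<epsilon>" "\<forall>j<length V. V!j \<in> {-1..1}" "k < length V" "V!k = -1"
  shows "Phi h \<epsilon> V ! k = -1"
proof -
  have nn: "\<forall>j\<in>nbhd \<epsilon> V k. 0 \<le> - V!j" using assms unfolding nbhd_def by auto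
  have "- V!k \<le> (\<Sum>j\<in>nbhd \<epsilon> V k. - V ! j)"
    by (rule member_le_sum) (use nn nbhd_self assms nbhd_finite in auto)
  then have "(\<Sum>j\<in>nbhd \<epsilon> V k. V ! j) < 0" using assms by (simp add: sum_negf)
  moreover have "0 < card (nbhd \<epsilon> V k)" using nbhd_card_pos assms by blast
  ultimately have "h / card (nbhd \<epsilon> V k) * (\<Sum>j\<in>nbhd \<epsilon> V k. V ! j) < 0" using assms
    by (simp add: mult_pos_neg divide_neg_pos)
  then have "wval h \<epsilon> V k < -1" unfolding wval_def using assms by simp
  then show ?thesis using assms by (simp add: Phi_nth clip_def)
qed

lemma push_up:
  assumes "0 < h" "\<epsilon> \<le> 1/2" "0 \<le> \<epsilon>" "\<forall>j<length V. V!j \<in> {-1..1}" "k < length V" "1/2 \<le> V!k"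
  shows "min 1 (V!k + h / (2 * length V)) \<le> Phi h \<epsilon> V ! k"
proof -
  have nn: "\<forall>j\<in>nbhd \<epsilon> V k. 0 \<le> V!j" using assms unfolding nbhd_def by auto
  have "V!k \<le> (\<Sum>j\<in>nbhd \<epsilon> V k. V ! j)"
    by (rule member_le_sum) (use nn nbhd_self assms nbhd_finite in auto)
  then have s: "1/2 \<le> (\<Sum>j\<in>nbhd \<epsilon> V k. V ! j)" using assms by simp
  have c: "0 < card (nbhd \<epsilon> V k)" "card (nbhd \<epsilon> V k) \<le> length V" using nbhd_card_pos nbhd_card_le assms by blast+
  have "h / (2 * length V) \<le> h / card (nbhd \<epsilon> V k) * (1/2)"
    using c assms(1) by (simp add: frac_le)
  also have "\<dots> \<le> h / card (nbhd \<epsilon> V k) * (\<Sum>j\<in>nbhd \<epsilon> V k. V ! j)"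
    using s c assms(1) by (intro mult_left_mono) auto
  finally have "V!k + h / (2 * length V) \<le> wval h \<epsilon> V k" unfolding wval_def by simp
  then show ?thesis using assms by (auto simp add: Phi_nth clip_def)
qed

lemma push_down:
  assumes "0 < h" "\<epsilon> \<le> 1/2" "0 \<le> \<epsilon>" "\<forall>j<length V. V!j \<in> {-1..1}" "k < length V" "V!k \<le> -1/2"
  shows "Phi h \<epsilon> V ! k \<le> max (-1) (V!k - h / (2 * length V))"
proof -
  have nn: "\<forall>j\<in>nbhd \<epsilon> V k. 0 \<le> - V!j" using assms unfolding nbhd_def by auto
  have "- V!k \<le> (\<Sum>j\<in>nbhd \<epsilon> V k. - V ! j)"
    by (rule member_le_sum) (use nn nbhd_self assms nbhd_finite in auto)
  then have s: "1/2 \<le> (\<Sum>j\<in>nbhd \<epsilon> V k. - V ! j)" using assms by simp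
  have c: "0 < card (nbhd \<epsilon> V k)" "card (nbhd \<epsilon> V k) \<le> length V" using nbhd_card_pos nbhd_card_le assms by blast+
  have "h / (2 * length V) \<le> h / card (nbhd \<epsilon> V k) * (1/2)"
    using c assms(1) by (simp add: frac_le)
  also have "\<dots> \<le> h / card (nbhd \<epsilon> V k) * (\<Sum>j\<in>nbhd \<epsilon> V k. - V ! j)"
    using s c assms(1) by (intro mult_left_mono) auto
  finally have "wval h \<epsilon> V k \<le> V!k - h / (2 * length V)" unfolding wval_def by (simp add: sum_negf)
  then show ?thesis using assms by (auto simp add: Phi_nth clip_def)
qed

lemma min_step:
  fixes a b x y d :: real
  assumes "min 1 (a + b) \<le> x" "x \<le> 1" "min 1 (x + d) \<le> y" "0 \<le> d"
  shows "min 1 (a + (b + d)) \<le> y"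
  using assms unfolding min_def by (auto split: if_splits)

lemma max_step:
  fixes a b x y d :: real
  assumes "x \<le> max (-1) (a - b)" "-1 \<le> x" "y \<le> max (-1) (x - d)" "0 \<le> d"
  shows "y \<le> max (-1) (a - (b + d))"
  using assms unfolding max_def by (auto split: if_splits)

theorem theorem4:
  fixes N :: nat and h \<epsilon> :: real and V0 :: "real list"
  assumes "N \<ge> 1" and "0 < h" and "h < 1" and "0 < \<epsilon>" and "\<epsilon> \<le> 1/2"
    and "length V0 = N"
    and "\<forall>k<N. V0 ! k \<in> {-1..1}"
    and "sorted V0"
  shows "\<exists>L. length L = N \<and> Phi h \<epsilon> L = L \<and>
           (\<forall>k<N. (\<lambda>n. ((Phi h \<epsilon>) ^^ n) V0 ! k) \<longlonglongrightarrow> L ! k)"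
proof -
  define X where "X n = (Phi h \<epsilon> ^^ n) V0" for n
  have XS: "X (Suc n) = Phi h \<epsilon> (X n)" for n by (simp add: X_def)
  have lenX: "length (X n) = N" for n
    by (induct n) (simp_all add: XS, simp add: X_def assms(6))
  have e0: "0 \<le> \<epsilon>" using assms by simp
  have inbX: "\<forall>k<N. X n ! k \<in> {-1..1}" for n
  proof (induct n)
    case 0 then show ?case using assms(7) by (simp add: X_def)
  next
    case (Suc n) then show ?case using lenX clip_bounds by (simp add: XS Phi_nth)
  qed
  have inbX': "\<forall>j<length (X n). X n ! j \<in> {-1..1}" for n using inbX lenX by simp
  have stepX: "X (Suc n) ! k = clip (wval h \<epsilon> (X n) k)" if "k<N" for n k
    using XS Phi_nth lenX that by simp
  have absX: "\<bar>X n ! k\<bar> \<le> 1" if "k<N" for n k using inbX[of n] that by (auto simp: abs_le_iff)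
  have stayX: "X m ! k = X n ! k" if "k<N" "\<bar>X n ! k\<bar> = 1" "n \<le> m" for n m k
    using that(3)
  proof (induct m rule: dec_induct)
    case base then show ?case by simp
  next
    case (step m)
    have "X m ! k = 1 \<or> X m ! k = -1" using step that by auto
    then show ?case unfolding XS
      using stay_top[OF assms(2) assms(5) e0 inbX'] stay_bot[OF assms(2) assms(5) e0 inbX'] that(1) lenX step
      by auto
  qed
  define F where "F = {k. k<N \<and> (\<forall>n. \<bar>X n ! k\<bar> \<noteq> 1)}"
  have Npos: "0 < real N" using assms(1) by simp
  define \<delta> where "\<delta> = h / (2 * real N)"
  have \<delta>pos: "0 < \<delta>" using Npos assms(2) by (simp add: \<delta>_def)
  obtain m0 :: nat where m0: "1/2 \<le> m0 * \<delta>"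
  proof -
    have "real N / h \<le> real (nat \<lceil>real N / h\<rceil>)" by linarith
    then have "real N / h * \<delta> \<le> real (nat \<lceil>real N / h\<rceil>) * \<delta>" using \<delta>pos by (intro mult_right_mono) auto
    moreover have "real N / h * \<delta> = 1/2" using Npos assms(2) by (simp add: \<delta>_def field_simps)
    ultimately show ?thesis using that by auto
  qed
  have smallF: "\<bar>X n ! k\<bar> < 1/2" if "k \<in> F" for n k
  proof (rule ccontr)
    assume "\<not> ?thesis"
    then have "X n ! k \<ge> 1/2 \<or> X n ! k \<le> -1/2" by auto
    have kN: "k < N" using that by (simp add: F_def)
    show False
    proof (cases "X n ! k \<ge> 1/2")
      case True
      have "min 1 (1/2 + m * \<delta>) \<le> X (n+m) ! k" for m
      proof (induct m)
        case 0 then show ?case using True by simp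
      next
        case (Suc m)
        have x1: "X (n+m) ! k \<le> 1" using absX[OF kN] by (simp add: abs_le_iff)
        have md: "0 \<le> real m * \<delta>" using \<delta>pos by simp
        have ge: "1/2 \<le> X (n+m) ! k" using Suc md by linarith
        have "min 1 (X (n+m) ! k + h/(2*length (X (n+m)))) \<le> X (Suc (n+m)) ! k"
          unfolding XS by (rule push_up[OF assms(2,5) e0 inbX']) (use ge kN lenX in auto)
        then have "min 1 (X (n+m) ! k + \<delta>) \<le> X (Suc (n+m)) ! k" using lenX by (simp add: \<delta>_def)
        moreover have "real (Suc m) * \<delta> = real m * \<delta> + \<delta>" by (simp add: algebra_simps)
        ultimately show ?case using Suc x1 min_step max_step \<delta>pos by simp
      qed
      from this[of m0] have "1 \<le> X (n+m0) ! k" using m0 by auto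
      then have "\<bar>X (n+m0) ! k\<bar> = 1" using absX[OF kN, of "n+m0"] by (simp add: abs_le_iff)
      then show False using that by (simp add: F_def)
    next
      case False
      then have le: "X n ! k \<le> -1/2" using \<open>X n ! k \<ge> 1/2 \<or> X n ! k \<le> -1/2\<close> by auto
      have "X (n+m) ! k \<le> max (-1) (-1/2 - m * \<delta>)" for m
      proof (induct m)
        case 0 then show ?case using le by simp
      next
        case (Suc m)
        have x1: "-1 \<le> X (n+m) ! k" using absX[OF kN] by (simp add: abs_le_iff)
        have md: "0 \<le> real m * \<delta>" using \<delta>pos by simp
        have ge: "X (n+m) ! k \<le> -1/2" using Suc md by linarith
        have "X (Suc (n+m)) ! k \<le> max (-1) (X (n+m) ! k - h/(2*length (X (n+m))))"
          unfolding XS by (rule push_down[OF assms(2,5) e0 inbX']) (use ge kN lenX in auto)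
        then have "X (Suc (n+m)) ! k \<le> max (-1) (X (n+m) ! k - \<delta>)" using lenX by (simp add: \<delta>_def)
        moreover have "real (Suc m) * \<delta> = real m * \<delta> + \<delta>" by (simp add: algebra_simps)
        ultimately show ?case using Suc x1 min_step max_step \<delta>pos by simp
      qed
      from this[of m0] have "X (n+m0) ! k \<le> -1" using m0 by auto
      then have "\<bar>X (n+m0) ! k\<bar> = 1" using absX[OF kN, of "n+m0"] by (simp add: abs_le_iff)
      then show False using that by (simp add: F_def)
    qed
  qed
  have FN: "k < N" if "k \<in> F" for k using that by (simp add: F_def)
  have finF: "finite F" unfolding F_def by simp
  have nonF: "\<exists>n0. \<forall>n\<ge>n0. X n ! k = X n0 ! k \<and> \<bar>X n0 ! k\<bar> = 1" if "k<N" "k\<notin>F" for k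
  proof -
    from that obtain n0 where n0: "\<bar>X n0 ! k\<bar> = 1" by (auto simp: F_def)
    then show ?thesis using stayX[OF that(1) n0] by blast
  qed
  have "eventually (\<lambda>n. \<forall>k\<in>{..<N}-F. \<bar>X n ! k\<bar> = 1) sequentially"
  proof (rule eventually_ball_finite)
    show "finite ({..<N}-F)" by simp
    show "\<forall>k\<in>{..<N} - F. eventually (\<lambda>n. \<bar>X n ! k\<bar> = 1) sequentially"
    proof
      fix k assume "k \<in> {..<N} - F"
      then obtain n0 where "\<forall>n\<ge>n0. X n ! k = X n0 ! k \<and> \<bar>X n0 ! k\<bar> = 1" using nonF by auto
      then show "eventually (\<lambda>n. \<bar>X n ! k\<bar> = 1) sequentially"
        unfolding eventually_sequentially by metis
    qed
  qed
  then obtain N0 where N0: "\<And>n k. n \<ge> N0 \<Longrightarrow> k<N \<Longrightarrow> k\<notin>F \<Longrightarrow> \<bar>X n ! k\<bar> = 1"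
    unfolding eventually_sequentially by blast
  have freestep: "X (Suc n) ! k = wval h \<epsilon> (X n) k" if "k\<in>F" for n k
  proof -
    have "\<bar>clip (wval h \<epsilon> (X n) k)\<bar> < 1" using smallF[OF that, of "Suc n"] stepX[OF FN[OF that]] by simp
    then show ?thesis using stepX[OF FN[OF that]] clip_id by simp
  qed
  have gapstep: "X n ! l - X n ! k \<le> X (Suc n) ! l - X (Suc n) ! k"
    if "k\<in>F" "l\<in>F" "X n ! k \<le> X n ! l" for n k l
    using wval_gap[of h \<epsilon> k "X n" l] freestep[OF that(1)] freestep[OF that(2)] that lenX assms(2) e0 FN
    by auto
  have ordered: "incseq (\<lambda>n. X n ! l - X n ! k) \<and> (\<forall>n. 0 \<le> X n ! l - X n ! k)"
    if "k\<in>F" "l\<in>F" "X 0 ! k \<le> X 0 ! l" for k l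
  proof -
    have *: "0 \<le> X n ! l - X n ! k" for n
    proof (induct n)
      case 0 then show ?case using that by simp
    next
      case (Suc n) then show ?case using gapstep[OF that(1,2), of n] by linarith
    qed
    show ?thesis using * gapstep[OF that(1,2)] by (auto intro!: incseq_SucI)
  qed
  have absmono: "\<bar>X n ! l - X n ! k\<bar> \<le> \<bar>X m ! l - X m ! k\<bar>" if "k\<in>F" "l\<in>F" "n \<le> m" for n m k l
  proof (cases "X 0 ! k \<le> X 0 ! l")
    case True
    from ordered[OF that(1,2) True] have "incseq (\<lambda>n. X n ! l - X n ! k)" "\<forall>n. 0 \<le> X n ! l - X n ! k" by auto
    then show ?thesis using incseqD[of "\<lambda>n. X n ! l - X n ! k", OF _ that(3)] by auto
  next
    case False
    from ordered[OF that(2,1)] False have "incseq (\<lambda>n. X n ! k - X n ! l)" "\<forall>n. 0 \<le> X n ! k - X n ! l" by auto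
    then show ?thesis using incseqD[of "\<lambda>n. X n ! k - X n ! l", OF _ that(3)] by auto
  qed
  have convD: "convergent (\<lambda>n. X n ! l - X n ! k)" if "k\<in>F" "l\<in>F" for k l
  proof (cases "X 0 ! k \<le> X 0 ! l")
    case True
    from ordered[OF that(1,2) True] have inc: "incseq (\<lambda>n. X n ! l - X n ! k)" by auto
    have "\<forall>i. X i ! l - X i ! k \<le> 2" using absX[OF FN[OF that(1)]] absX[OF FN[OF that(2)]]
      by (auto simp: abs_le_iff) (smt (verit))
    then obtain L where "(\<lambda>n. X n ! l - X n ! k) \<longlonglongrightarrow> L" using incseq_convergent[OF inc] by blast
    then show ?thesis by (auto simp: convergent_def)
  next
    case False
    from ordered[OF that(2,1)] False have inc: "incseq (\<lambda>n. X n ! k - X n ! l)" by auto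
    have "\<forall>i. X i ! k - X i ! l \<le> 2" using absX[OF FN[OF that(1)]] absX[OF FN[OF that(2)]]
      by (auto simp: abs_le_iff) (smt (verit))
    then obtain L where "(\<lambda>n. X n ! k - X n ! l) \<longlonglongrightarrow> L" using incseq_convergent[OF inc] by blast
    then have "(\<lambda>n. - (X n ! k - X n ! l)) \<longlonglongrightarrow> - L" by (intro tendsto_minus)
    then show ?thesis by (auto simp: convergent_def)
  qed
  define Q where "Q k l \<longleftrightarrow> (\<forall>n. \<bar>X n ! l - X n ! k\<bar> \<le> \<epsilon>)" for k l
  have Qsym: "Q k l = Q l k" for k l unfolding Q_def by (simp add: abs_minus_commute)
  have Qrefl: "Q k k" for k unfolding Q_def using e0 by simp
  have "eventually (\<lambda>n. \<forall>p\<in>F\<times>F. (\<bar>X n ! snd p - X n ! fst p\<bar> \<le> \<epsilon>) = Q (fst p) (snd p)) sequentially"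
  proof (rule eventually_ball_finite)
    show "finite (F\<times>F)" using finF by simp
    show "\<forall>p\<in>F\<times>F. eventually (\<lambda>n. (\<bar>X n ! snd p - X n ! fst p\<bar> \<le> \<epsilon>) = Q (fst p) (snd p)) sequentially"
    proof
      fix p assume p: "p \<in> F\<times>F"
      obtain k l where kl: "p = (k,l)" by force
      have kF: "k\<in>F" and lF: "l\<in>F" using p kl by auto
      show "eventually (\<lambda>n. (\<bar>X n ! snd p - X n ! fst p\<bar> \<le> \<epsilon>) = Q (fst p) (snd p)) sequentially"
      proof (cases "Q k l")
        case True
        then show ?thesis unfolding kl by (simp add: Q_def)
      next
        case False
        then obtain m where m: "\<bar>X m ! l - X m ! k\<bar> > \<epsilon>" unfolding Q_def by (auto simp: not_le)
        have "\<forall>n\<ge>m. \<bar>X n ! l - X n ! k\<bar> > \<epsilon>" using absmono[OF kF lF] m by (meson order_less_le_trans)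
        then show ?thesis unfolding kl eventually_sequentially using False by (auto simp: not_le)
      qed
    qed
  qed
  then obtain N1 where N1: "\<And>n k l. n \<ge> N1 \<Longrightarrow> k\<in>F \<Longrightarrow> l\<in>F \<Longrightarrow> (\<bar>X n ! l - X n ! k\<bar> \<le> \<epsilon>) = Q k l"
    unfolding eventually_sequentially by fastforce
  define M where "M = max N0 N1"
  define J where "J k = {l\<in>F. Q k l}" for k
  have JF: "J k \<subseteq> F" for k by (auto simp: J_def)
  have finJ: "finite (J k)" for k using finF JF finite_subset by blast
  have selfJ: "k \<in> J k" if "k\<in>F" for k using that Qrefl by (simp add: J_def)
  have nbJ: "nbhd \<epsilon> (X n) k = J k" if "n \<ge> M" "k\<in>F" for n k
  proof (intro set_eqI iffI)
    fix l assume l: "l \<in> nbhd \<epsilon> (X n) k"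
    then have lN: "l < N" and d: "\<bar>X n ! l - X n ! k\<bar> \<le> \<epsilon>" by (auto simp: nbhd_def lenX)
    have lF: "l \<in> F"
    proof (rule ccontr)
      assume "l \<notin> F"
      then have "\<bar>X n ! l\<bar> = 1" using N0[of n l] that lN by (simp add: M_def)
      moreover have "\<bar>X n ! k\<bar> < 1/2" using smallF[OF that(2)] .
      ultimately show False using d assms(5) by (auto simp: abs_if split: if_splits)
    qed
    then show "l \<in> J k" using N1[of n k l] that d by (simp add: J_def M_def)
  next
    fix l assume l: "l \<in> J k"
    then have lF: "l \<in> F" "Q k l" by (auto simp: J_def)
    then show "l \<in> nbhd \<epsilon> (X n) k" using N1[of n k l] that FN[OF lF(1)]
      by (simp add: nbhd_def lenX M_def)
  qed
  define c where "c k = real (card (J k))" for k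
  have cpos: "0 < c k" if "k\<in>F" for k
    using selfJ[OF that] finJ[of k] by (auto simp: c_def card_gt_0_iff)
  have linstep: "X (Suc n) ! k = X n ! k + h / c k * (\<Sum>l\<in>J k. X n ! l)" if "n \<ge> M" "k\<in>F" for n k
    using freestep[OF that(2), of n] nbJ[OF that] by (simp add: wval_def c_def)
  have swap: "(\<Sum>k\<in>F. \<Sum>l\<in>J k. g l) = (\<Sum>l\<in>F. c l * g l)" for g :: "nat \<Rightarrow> real"
  proof -
    have "(\<Sum>k\<in>F. \<Sum>l\<in>J k. g l) = (\<Sum>k\<in>F. \<Sum>l\<in>{l. l\<in>F \<and> Q k l}. g l)" by (simp add: J_def)
    also have "\<dots> = (\<Sum>l\<in>F. \<Sum>k\<in>{k. k\<in>F \<and> Q k l}. g l)"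
      by (rule sum.swap_restrict[OF finF finF])
    also have "\<dots> = (\<Sum>l\<in>F. \<Sum>k\<in>J l. g l)"
      by (intro sum.cong refl) (auto simp: J_def Qsym)
    also have "\<dots> = (\<Sum>l\<in>F. c l * g l)" by (simp add: c_def)
    finally show ?thesis .
  qed
  define s where "s n = (\<Sum>k\<in>F. c k * X n ! k)" for n
  have sstep: "s (Suc n) = (1 + h) * s n" if "n \<ge> M" for n
  proof -
    have "s (Suc n) = (\<Sum>k\<in>F. c k * X n ! k + h * (\<Sum>l\<in>J k. X n ! l))"
      unfolding s_def
    proof (intro sum.cong refl)
      fix k assume k: "k \<in> F"
      have "c k \<noteq> 0" using cpos[OF k] by simp
      then show "c k * X (Suc n) ! k = c k * X n ! k + h * (\<Sum>l\<in>J k. X n ! l)"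
        using linstep[OF that k] by (simp add: field_simps)
    qed
    also have "\<dots> = s n + h * (\<Sum>k\<in>F. \<Sum>l\<in>J k. X n ! l)"
      by (simp add: s_def sum.distrib sum_distrib_left)
    also have "\<dots> = (1 + h) * s n" by (simp add: swap s_def algebra_simps)
    finally show ?thesis .
  qed
  define B where "B = (\<Sum>k\<in>F. c k)"
  have sbound: "\<bar>s n\<bar> \<le> B" for n
  proof -
    have "\<bar>s n\<bar> \<le> (\<Sum>k\<in>F. \<bar>c k * X n ! k\<bar>)" unfolding s_def by (rule sum_abs)
    also have "\<dots> \<le> B" unfolding B_def
    proof (intro sum_mono)
      fix k assume k: "k \<in> F"
      have "\<bar>c k * X n ! k\<bar> = c k * \<bar>X n ! k\<bar>" using cpos[OF k] by (simp add: abs_mult)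
      also have "\<dots> \<le> c k * 1" using cpos[OF k] absX[OF FN[OF k]] by (intro mult_left_mono) auto
      finally show "\<bar>c k * X n ! k\<bar> \<le> c k" by simp
    qed
    finally show ?thesis .
  qed
  have spow: "s (M + m) = (1 + h) ^ m * s M" for m
    by (induct m) (simp_all add: sstep)
  have sM: "s M = 0"
  proof (rule ccontr)
    assume ne: "s M \<noteq> 0"
    obtain m :: nat where m: "B / (h * \<bar>s M\<bar>) < m" using reals_Archimedean2 by blast
    have hs: "0 < h * \<bar>s M\<bar>" using ne assms(2) by simp
    have "B < m * (h * \<bar>s M\<bar>)" using m hs by (simp add: field_simps)
    also have "\<dots> \<le> (1 + m * h) * \<bar>s M\<bar>" by (simp add: algebra_simps)
    also have "\<dots> \<le> (1 + h) ^ m * \<bar>s M\<bar>"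
      using Bernoulli_inequality[of h m] assms(2) by (intro mult_right_mono) auto
    also have "\<dots> = \<bar>s (M + m)\<bar>" using assms(2) by (simp add: spow abs_mult)
    finally show False using sbound[of "M+m"] by simp
  qed
  have s0: "s n = 0" if "n \<ge> M" for n
    using spow[of "n - M"] sM that by simp
  have convF: "convergent (\<lambda>n. X n ! k)" if kF: "k\<in>F" for k
  proof -
    define C where "C = (\<Sum>l\<in>F. c l)"
    have Cpos: "0 < C" unfolding C_def by (rule sum_pos[OF finF]) (use kF cpos in auto)
    have "convergent (\<lambda>n. \<Sum>l\<in>F. c l * (X n ! k - X n ! l))"
    proof (rule convergent_sum)
      fix l assume lF: "l \<in> F"
      have "convergent (\<lambda>n. X n ! k - X n ! l)" using convD[OF lF kF] .
      then obtain A where "(\<lambda>n. X n ! k - X n ! l) \<longlonglongrightarrow> A" unfolding convergent_def by blast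
      then have "(\<lambda>n. c l * (X n ! k - X n ! l)) \<longlonglongrightarrow> c l * A" by (rule tendsto_mult_left)
      then show "convergent (\<lambda>n. c l * (X n ! k - X n ! l))" unfolding convergent_def by blast
    qed
    then obtain A where A: "(\<lambda>n. \<Sum>l\<in>F. c l * (X n ! k - X n ! l)) \<longlonglongrightarrow> A"
      by (auto simp: convergent_def)
    then have A': "(\<lambda>n. (\<Sum>l\<in>F. c l * (X n ! k - X n ! l)) / C) \<longlonglongrightarrow> A / C"
      using Cpos by (intro tendsto_divide tendsto_const) auto
    have "eventually (\<lambda>n. (\<Sum>l\<in>F. c l * (X n ! k - X n ! l)) / C = X n ! k) sequentially"
      unfolding eventually_sequentially
    proof (intro exI[of _ M] allI impI)
      fix n assume n: "M \<le> n"
      have "(\<Sum>l\<in>F. c l * (X n ! k - X n ! l)) = (\<Sum>l\<in>F. c l * X n ! k) - (\<Sum>l\<in>F. c l * X n ! l)"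
        unfolding right_diff_distrib by (rule sum_subtractf)
      also have "\<dots> = C * X n ! k - s n"
        unfolding C_def s_def sum_distrib_right by (rule refl)
      also have "\<dots> = C * X n ! k" using s0[OF n] by simp
      finally show "(\<Sum>l\<in>F. c l * (X n ! k - X n ! l)) / C = X n ! k" using Cpos by simp
    qed
    with A' have "(\<lambda>n. X n ! k) \<longlonglongrightarrow> A / C" by (rule Lim_transform_eventually)
    then show ?thesis by (auto simp: convergent_def)
  qed
  have convN: "convergent (\<lambda>n. X n ! k)" if kk: "k<N" "k\<notin>F" for k
  proof -
    obtain n0 where n0: "\<forall>n\<ge>n0. X n ! k = X n0 ! k" using nonF[OF kk] by blast
    then have "eventually (\<lambda>n. X n ! k = X n0 ! k) sequentially"
      unfolding eventually_sequentially by blast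
    then have "(\<lambda>n. X n ! k) \<longlonglongrightarrow> X n0 ! k" by (rule tendsto_eventually)
    then show ?thesis by (auto simp: convergent_def)
  qed
  define L where "L = map (\<lambda>k. lim (\<lambda>n. X n ! k)) [0..<N]"
  have lenL: "length L = N" by (simp add: L_def)
  have limL: "(\<lambda>n. X n ! k) \<longlonglongrightarrow> L ! k" if "k<N" for k
    using convF convN that by (cases "k\<in>F") (auto simp: L_def convergent_LIMSEQ_iff)
  have Lb: "L ! k \<in> {-1..1}" if kN: "k<N" for k
  proof -
    have "-1 \<le> L ! k" by (rule LIMSEQ_le_const[OF limL[OF kN]]) (use inbX kN in auto)
    moreover have "L ! k \<le> 1" by (rule LIMSEQ_le_const2[OF limL[OF kN]]) (use inbX kN in auto)
    ultimately show ?thesis by simp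
  qed
  have LnonF: "L ! k = 1 \<or> L ! k = -1" if kk: "k<N" "k\<notin>F" for k
  proof -
    obtain n0 where n0: "\<forall>n\<ge>n0. X n ! k = X n0 ! k" "\<bar>X n0 ! k\<bar> = 1" using nonF[OF kk] by blast
    then have "eventually (\<lambda>n. X n ! k = X n0 ! k) sequentially"
      unfolding eventually_sequentially by blast
    then have "(\<lambda>n. X n ! k) \<longlonglongrightarrow> X n0 ! k" by (rule tendsto_eventually)
    then have "L ! k = X n0 ! k" using limL[OF kk(1)] LIMSEQ_unique by blast
    then show ?thesis using n0(2) by (cases "X n0 ! k \<ge> 0") auto
  qed
  have limD: "(\<lambda>n. \<bar>X n ! l - X n ! k\<bar>) \<longlonglongrightarrow> \<bar>L ! l - L ! k\<bar>" if "k<N" "l<N" for k l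
    by (intro tendsto_intros limL that)
  have QL: "\<bar>L ! l - L ! k\<bar> \<le> \<epsilon>" if kl: "k\<in>F" "l\<in>F" "Q k l" for k l
    by (rule LIMSEQ_le_const2[OF limD[OF FN[OF kl(1)] FN[OF kl(2)]]]) (use kl(3) in \<open>auto simp: Q_def\<close>)
  have nQL: "\<epsilon> < \<bar>L ! l - L ! k\<bar>" if kl: "k\<in>F" "l\<in>F" "\<not> Q k l" for k l
  proof -
    obtain m where m: "\<bar>X m ! l - X m ! k\<bar> > \<epsilon>" using kl(3) unfolding Q_def by (auto simp: not_le)
    have "\<bar>X m ! l - X m ! k\<bar> \<le> \<bar>L ! l - L ! k\<bar>"
      by (rule LIMSEQ_le_const[OF limD[OF FN[OF kl(1)] FN[OF kl(2)]]]) (use absmono[OF kl(1,2)] in auto)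
    then show ?thesis using m by simp
  qed
  have sumJ: "(\<Sum>l\<in>J k. L ! l) = 0" if kF: "k\<in>F" for k
  proof -
    have l1: "(\<lambda>n. X (Suc n) ! k) \<longlonglongrightarrow> L ! k" using LIMSEQ_Suc[OF limL[OF FN[OF kF]]] .
    have l2: "(\<lambda>n. X n ! k + h / c k * (\<Sum>l\<in>J k. X n ! l)) \<longlonglongrightarrow> L ! k + h / c k * (\<Sum>l\<in>J k. L ! l)"
    proof -
      have lJ: "\<And>l. l \<in> J k \<Longrightarrow> (\<lambda>n. X n ! l) \<longlonglongrightarrow> L ! l" using JF FN limL by blast
      show ?thesis by (intro tendsto_add tendsto_mult tendsto_const tendsto_sum limL[OF FN[OF kF]] lJ)
    qed
    have "eventually (\<lambda>n. X n ! k + h / c k * (\<Sum>l\<in>J k. X n ! l) = X (Suc n) ! k) sequentially"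
      unfolding eventually_sequentially by (intro exI[of _ M] allI impI) (simp add: linstep[OF _ kF])
    with l2 have "(\<lambda>n. X (Suc n) ! k) \<longlonglongrightarrow> L ! k + h / c k * (\<Sum>l\<in>J k. L ! l)"
      by (rule Lim_transform_eventually)
    then have "L ! k = L ! k + h / c k * (\<Sum>l\<in>J k. L ! l)" using l1 LIMSEQ_unique by blast
    then show ?thesis using cpos[OF kF] assms(2) by simp
  qed
  have LFhalf: "\<bar>L ! k\<bar> \<le> 1/2" if kF: "k\<in>F" for k
  proof -
    have "\<bar>L ! k\<bar> \<le> 1/2"
      by (rule LIMSEQ_le_const2[OF tendsto_rabs[OF limL[OF FN[OF kF]]]]) (use smallF[OF kF] in \<open>auto intro: less_imp_le\<close>)
    then show ?thesis .
  qed
  have LFstrict: "\<bar>L ! k\<bar> < 1/2" if kF: "k\<in>F" for k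
  proof (rule ccontr)
    assume "\<not> ?thesis"
    then have "L ! k = 1/2 \<or> L ! k = -1/2" using LFhalf[OF kF] by (cases "L ! k \<ge> 0") auto
    then show False
    proof
      assume a: "L ! k = 1/2"
      have nn: "\<forall>l\<in>J k. 0 \<le> L ! l"
      proof
        fix l assume "l \<in> J k"
        then have "\<bar>L ! l - L ! k\<bar> \<le> \<epsilon>" using QL[OF kF] JF by (auto simp: J_def)
        then show "0 \<le> L ! l" using a assms(5) by (auto simp: abs_le_iff)
      qed
      have "L ! k \<le> (\<Sum>l\<in>J k. L ! l)"
        by (rule member_le_sum) (use nn selfJ[OF kF] finJ in auto)
      then show False using sumJ[OF kF] a by simp
    next
      assume a: "L ! k = -1/2"
      have nn: "\<forall>l\<in>J k. 0 \<le> - L ! l"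
      proof
        fix l assume "l \<in> J k"
        then have "\<bar>L ! l - L ! k\<bar> \<le> \<epsilon>" using QL[OF kF] JF by (auto simp: J_def)
        then show "0 \<le> - L ! l" using a assms(5) by (auto simp: abs_le_iff)
      qed
      have "- L ! k \<le> (\<Sum>l\<in>J k. - L ! l)"
        by (rule member_le_sum) (use nn selfJ[OF kF] finJ in auto)
      then show False using sumJ[OF kF] a by (simp add: sum_negf)
    qed
  qed
  have nbL: "nbhd \<epsilon> L k = J k" if kF: "k\<in>F" for k
  proof (intro set_eqI iffI)
    fix l assume l: "l \<in> nbhd \<epsilon> L k"
    then have lN: "l < N" and d: "\<bar>L ! l - L ! k\<bar> \<le> \<epsilon>" by (auto simp: nbhd_def lenL)
    have lF: "l \<in> F"
    proof (rule ccontr)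
      assume "l \<notin> F"
      then have "L ! l = 1 \<or> L ! l = -1" using LnonF lN by blast
      then show False using LFstrict[OF kF] d assms(5) by (auto simp: abs_le_iff abs_less_iff)
    qed
    then show "l \<in> J k" using nQL[OF kF lF] d by (auto simp: J_def not_less)
  next
    fix l assume "l \<in> J k"
    then have lF: "l \<in> F" "Q k l" by (auto simp: J_def)
    then show "l \<in> nbhd \<epsilon> L k" using QL[OF kF lF] FN[OF lF(1)] by (simp add: nbhd_def lenL)
  qed
  have fixL: "Phi h \<epsilon> L = L"
  proof (rule nth_equalityI)
    show "length (Phi h \<epsilon> L) = length L" by simp
    fix k assume "k < length (Phi h \<epsilon> L)"
    then have kN: "k < N" by (simp add: lenL)
    have inbL: "\<forall>j<length L. L ! j \<in> {-1..1}" using Lb lenL by simp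
    show "Phi h \<epsilon> L ! k = L ! k"
    proof (cases "k \<in> F")
      case True
      have "wval h \<epsilon> L k = L ! k" unfolding wval_def using nbL[OF True] sumJ[OF True] by simp
      moreover have "clip (L ! k) = L ! k" using Lb[OF kN] by (simp add: clip_def)
      ultimately show ?thesis using kN lenL by (simp add: Phi_nth)
    next
      case False
      then have "L ! k = 1 \<or> L ! k = -1" using LnonF kN by blast
      then show ?thesis using stay_top[OF assms(2) assms(5) e0 inbL] stay_bot[OF assms(2) assms(5) e0 inbL] kN lenL
        by auto
    qed
  qed
  show ?thesis
    using lenL fixL limL by (auto simp: X_def)
qed

end
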